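(* Let $r,n\in\mathbb{N}$ with $$e\left(\tfrac{1}{2}\log(2n-1)+1\right)\leq r\leq n.$$ Then for any $s_1,\ldots,s_r\in\mathbb{N}$, $\overline{H}_n(s_1,\ldots,s_r)$ is not an integer.
   Context: $\mathbb{N}$ is the set of positive integers, $\log$ is the natural logarithm, and $\overline{H}_n(s_1,\ldots,s_r)=\sum_{0\leq k_1<\cdots<k_r\leq n-1}\prod_{j=1}^r (2k_j+1)^{-s_j}$. *)

theory Defs
  imports "HOL-Analysis.Analysis"
begin

definition odd_mhs :: "nat \<Rightarrow> nat list \<Rightarrow> real" where
  "odd_mhs n s =
     (\<Sum>ks \<in> {ks. length ks = length s \<and> sorted_wrt (<) ks \<and> (\<forall>k\<in>set ks. k < n)}.
        \<Prod>j<length s. 1 / (2 * real (ks ! j) + 1) ^ (s ! j))"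

end

theory Submission
  imports Defs
begin

lemma prod_nth_set:
  assumes "distinct ks"
  shows "(\<Prod>j<length ks. f (ks ! j)) = prod f (set ks)"
proof -
  have i: "inj_on (nth ks) {..<length ks}" using assms by (simp add: inj_on_nth)
  have im: "(nth ks) ` {..<length ks} = set ks" by (auto simp: set_conv_nth)
  show ?thesis using prod.reindex[OF i, of f] im by simp
qed

definition esym :: "(nat \<Rightarrow> real) \<Rightarrow> nat \<Rightarrow> nat set \<Rightarrow> real" where
  "esym a r A = (\<Sum>S\<in>Pow A. if card S = r then prod a S else 0)"

lemma bern:
  fixes p b :: real
  assumes "p \<ge> 0" "b \<ge> 0"
  shows "p ^ Suc m + real (Suc m) * b * p ^ m \<le> (p + b) ^ Suc m"
proof (induction m)
  case 0 then show ?case by simp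
next
  case (Suc m)
  have "(p + b) ^ Suc (Suc m) = (p + b) * (p+b) ^ Suc m" by simp
  also have "\<dots> \<ge> (p + b) * (p ^ Suc m + real (Suc m) * b * p ^ m)"
    using Suc assms by (intro mult_left_mono) auto
  finally have h: "(p + b) * (p ^ Suc m + real (Suc m) * b * p ^ m) \<le> (p + b) ^ Suc (Suc m)" .
  have "p ^ Suc (Suc m) + real (Suc (Suc m)) * b * p ^ Suc m
      \<le> (p + b) * (p ^ Suc m + real (Suc m) * b * p ^ m)"
    using assms by (simp add: algebra_simps)
  then show ?case using h by linarith
qed

lemma esym0:
  assumes "finite A"
  shows "esym a 0 A = 1"
proof -
  have "esym a 0 A = (\<Sum>S\<in>Pow A. if S = {} then 1 else 0)"
    unfolding esym_def
  proof (rule sum.cong[OF refl])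
    fix S assume "S \<in> Pow A"
    then have "finite S" using assms finite_subset by auto
    then show "(if card S = 0 then prod a S else 0) = (if S = {} then 1 else 0)" by simp
  qed
  also have "\<dots> = 1" using assms by (simp add: sum.delta)
  finally show ?thesis .
qed

lemma esym_bound:
  assumes "finite A" "\<And>x. x \<in> A \<Longrightarrow> a x \<ge> 0"
  shows "fact r * esym a r A \<le> (sum a A) ^ r"
  using assms
proof (induction A arbitrary: r rule: finite_induct)
  case empty
  show ?case
  proof (cases r)
    case 0 then show ?thesis using esym0[of "{}" a] by simp
  next
    case (Suc m) then show ?thesis by (simp add: esym_def)
  qed
next
  case (insert x A)
  have fP: "finite (Pow A)" using insert by simp
  have dis: "Pow A \<inter> insert x ` Pow A = {}" using insert by auto
  have inj: "inj_on (insert x) (Pow A)"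
    by (intro inj_onI) (metis Pow_iff insert.hyps(2) insert_ident subsetD)
  have split: "esym a r (insert x A) = esym a r A +
     (\<Sum>S\<in>Pow A. if card (insert x S) = r then prod a (insert x S) else 0)"
  proof -
    have "esym a r (insert x A) = (\<Sum>S\<in>Pow A. if card S = r then prod a S else 0)
       + (\<Sum>S\<in>insert x ` Pow A. if card S = r then prod a S else 0)"
      unfolding esym_def Pow_insert
      by (rule sum.union_disjoint[OF fP _ dis]) (use fP in simp)
    also have "(\<Sum>S\<in>insert x ` Pow A. if card S = r then prod a S else 0)
       = (\<Sum>S\<in>Pow A. if card (insert x S) = r then prod a (insert x S) else 0)"
      by (subst sum.reindex[OF inj]) (simp add: o_def)
    finally show ?thesis unfolding esym_def .
  qed
  have nn: "0 \<le> sum a A" using insert by (simp add: sum_nonneg)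
  have ax: "a x \<ge> 0" using insert by simp
  show ?case
  proof (cases r)
    case 0
    then show ?thesis using esym0[of "insert x A" a] insert(1) by simp
  next
    case (Suc m)
    have ins: "(\<Sum>S\<in>Pow A. if card (insert x S) = r then prod a (insert x S) else 0)
        = a x * esym a m A"
      unfolding esym_def sum_distrib_left
    proof (rule sum.cong[OF refl])
      fix S assume "S \<in> Pow A"
      then have "finite S" "x \<notin> S" using insert finite_subset by auto
      then show "(if card (insert x S) = r then prod a (insert x S) else 0) =
           a x * (if card S = m then prod a S else 0)" using Suc by simp
    qed
    have IH1: "fact r * esym a r A \<le> sum a A ^ r" using insert by simp
    have IH2: "fact m * esym a m A \<le> sum a A ^ m" using insert by simp
    have "fact r * esym a r (insert x A) = fact r * esym a r A + real r * a x * (fact m * esym a m A)"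
      using split ins Suc by (simp add: algebra_simps)
    also have "\<dots> \<le> sum a A ^ r + real r * a x * sum a A ^ m"
      using IH1 IH2 ax by (intro add_mono mult_left_mono) auto
    also have "\<dots> \<le> (sum a A + a x) ^ r" using bern[OF nn ax, of m] Suc by simp
    finally show ?thesis using insert by (simp add: add.commute)
  qed
qed


lemma harm_bound:
  assumes "n \<ge> 1"
  shows "(\<Sum>k<n. 1 / (2 * real k + 1)) \<le> 1 + 1/2 * ln (2 * real n - 1)"
  using assms
proof (induction n rule: nat_induct_at_least)
  case base then show ?case by simp
next
  case (Suc n)
  have p: "2 * real n - 1 > 0" using Suc by simp
  have q: "2 * real n + 1 > 0" by simp
  have l: "ln ((2 * real n - 1) / (2 * real n + 1)) \<le> (2 * real n - 1) / (2 * real n + 1) - 1"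
    using p q by (intro ln_le_minus_one) simp
  have l2: "ln ((2 * real n - 1) / (2 * real n + 1)) = ln (2 * real n - 1) - ln (2 * real n + 1)"
    using p q by (simp add: ln_div)
  have e: "(2 * real n - 1) / (2 * real n + 1) - 1 = - 2 / (2 * real n + 1)"
    using q by (simp add: field_simps)
  have "1 / (2 * real n + 1) \<le> 1/2 * ln (2 * real (Suc n) - 1) - 1/2 * ln (2 * real n - 1)"
    using l l2 e by (simp add: algebra_simps)
  then show ?case using Suc.IH by simp
qed

lemma fact_bound:
  assumes "r \<ge> 1"
  shows "real r ^ r \<le> fact r * exp (real r - 1)"
  using assms
proof (induction r rule: nat_induct_at_least)
  case base then show ?case by simp
next
  case (Suc r)
  have rp: "real r > 0" using Suc by simp
  have "(1 + 1 / real r) ^ r \<le> exp (1 / real r) ^ r"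
    using rp by (intro power_mono) (simp_all add: exp_ge_add_one_self)
  also have "\<dots> = exp 1" using rp by (simp add: exp_of_nat_mult[symmetric])
  finally have b: "(1 + 1 / real r) ^ r \<le> exp 1" .
  have "real (Suc r) ^ r = real r ^ r * (1 + 1 / real r) ^ r"
    using rp by (simp add: power_mult_distrib[symmetric] field_simps)
  also have "\<dots> \<le> (fact r * exp (real r - 1)) * exp 1"
    using Suc.IH b by (intro mult_mono) auto
  also have "\<dots> = fact r * exp (real (Suc r) - 1)" by (simp add: mult.assoc flip: exp_add)
  finally have "real (Suc r) ^ r \<le> fact r * exp (real (Suc r) - 1)" .
  then have "real (Suc r) * real (Suc r) ^ r \<le> real (Suc r) * (fact r * exp (real (Suc r) - 1))"
    by (intro mult_left_mono) auto
  then show ?case by (simp add: algebra_simps)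
qed


theorem lemma2p3:
  fixes r n :: nat and s :: "nat list"
  assumes "r \<ge> 1" and "n \<ge> 1"
    and "exp 1 * (1/2 * ln (2 * real n - 1) + 1) \<le> real r"
    and "r \<le> n"
    and "length s = r" and "\<forall>x\<in>set s. x \<ge> 1"
  shows "odd_mhs n s \<notin> \<int>"
proof -
  define L where "L = {ks. length ks = length s \<and> sorted_wrt (<) ks \<and> (\<forall>k\<in>set ks. k < n)}"
  define a where "a = (\<lambda>k::nat. 1 / (2 * real k + 1))"
  have H: "odd_mhs n s = (\<Sum>ks\<in>L. \<Prod>j<length s. 1 / (2 * real (ks ! j) + 1) ^ (s ! j))"
    unfolding odd_mhs_def L_def ..
  have finL: "finite L"
  proof (rule finite_subset)
    show "L \<subseteq> {xs. set xs \<subseteq> {..<n} \<and> length xs = r}" unfolding L_def using assms(5) by auto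
    show "finite {xs. set xs \<subseteq> {..<n} \<and> length xs = r}" by (rule finite_lists_length_eq) simp
  qed
  have memL: "[0..<r] \<in> L" unfolding L_def using assms(4,5) by auto
  have pos: "odd_mhs n s > 0"
    unfolding H
    by (rule sum_pos2[OF finL memL]) (auto intro!: prod_pos prod_nonneg)
  have le1: "odd_mhs n s \<le> (\<Sum>ks\<in>L. \<Prod>j<length s. a (ks ! j))"
    unfolding H
  proof (rule sum_mono, rule prod_mono)
    fix ks j assume "j \<in> {..<length s}"
    then have "s ! j \<ge> 1" using assms(6) by auto
    moreover have "(1::real) \<le> 2 * real (ks ! j) + 1" by simp
    ultimately have "2 * real (ks ! j) + 1 \<le> (2 * real (ks ! j) + 1) ^ (s ! j)"
      by (metis power_increasing power_one_right)
    then show "0 \<le> 1 / (2 * real (ks ! j) + 1) ^ (s ! j) \<and>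
          1 / (2 * real (ks ! j) + 1) ^ (s ! j) \<le> a (ks ! j)"
      unfolding a_def by (auto intro!: divide_left_mono)
  qed
  have eq1: "(\<Sum>ks\<in>L. \<Prod>j<length s. a (ks ! j)) = (\<Sum>ks\<in>L. prod a (set ks))"
  proof (rule sum.cong[OF refl])
    fix ks assume "ks \<in> L"
    then have "distinct ks" "length ks = length s" unfolding L_def by (auto simp: strict_sorted_iff)
    then show "(\<Prod>j<length s. a (ks ! j)) = prod a (set ks)" using prod_nth_set by metis
  qed
  have inj: "inj_on set L"
    by (rule inj_onI) (auto simp: L_def intro: strict_sorted_equal)
  have img: "set ` L = {S \<in> Pow {..<n}. card S = r}"
  proof
    show "set ` L \<subseteq> {S \<in> Pow {..<n}. card S = r}"
      using assms(5) by (auto simp: L_def strict_sorted_iff distinct_card)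
    show "{S \<in> Pow {..<n}. card S = r} \<subseteq> set ` L"
    proof
      fix S assume S: "S \<in> {S \<in> Pow {..<n}. card S = r}"
      then have fS: "finite S" using finite_subset by auto
      have "sorted_list_of_set S \<in> L"
        using S fS assms(5) by (auto simp: L_def)
      moreover have "set (sorted_list_of_set S) = S" using fS by simp
      ultimately show "S \<in> set ` L" by (metis image_eqI)
    qed
  qed
  have eq2: "(\<Sum>ks\<in>L. prod a (set ks)) = esym a r {..<n}"
  proof -
    have "(\<Sum>ks\<in>L. prod a (set ks)) = (\<Sum>S\<in>set ` L. prod a S)"
      by (simp add: sum.reindex[OF inj])
    also have "\<dots> = (\<Sum>S\<in>{S \<in> Pow {..<n}. card S = r}. prod a S)" by (simp add: img)
    also have "\<dots> = esym a r {..<n}" unfolding esym_def by (rule sum.inter_filter) simp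
    finally show ?thesis .
  qed
  define T where "T = sum a {..<n}"
  have T0: "T \<ge> 0" unfolding T_def a_def by (auto intro: sum_nonneg)
  have eb: "fact r * esym a r {..<n} \<le> T ^ r"
    unfolding T_def by (rule esym_bound) (auto simp: a_def)
  have Tle: "T \<le> real r / exp 1"
  proof -
    have "T \<le> 1 + 1/2 * ln (2 * real n - 1)" unfolding T_def a_def using harm_bound[OF assms(2)] .
    then have "exp 1 * T \<le> real r" using assms(3)
      by (smt (verit) exp_gt_zero mult_left_mono)
    then show ?thesis by (simp add: field_simps)
  qed
  have "T ^ r \<le> (real r / exp 1) ^ r" using T0 Tle by (intro power_mono)
  also have "\<dots> = real r ^ r / exp (real r)"
    by (simp add: power_divide exp_of_nat_mult[symmetric])
  also have "\<dots> \<le> fact r * exp (real r - 1) / exp (real r)"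
    using fact_bound[OF assms(1)] by (simp add: divide_right_mono)
  also have "\<dots> < fact r"
  proof -
    have "exp (real r - 1) < exp (real r)" by simp
    then have "fact r * exp (real r - 1) < fact r * exp (real r)"
      by (intro mult_strict_left_mono) auto
    then show ?thesis by (simp add: divide_less_eq)
  qed
  finally have "fact r * esym a r {..<n} < fact r" using eb by linarith
  then have "esym a r {..<n} < 1" by simp
  then have lt1: "odd_mhs n s < 1" using le1 eq1 eq2 by linarith
  show ?thesis
  proof
    assume "odd_mhs n s \<in> \<int>"
    then obtain m where m: "odd_mhs n s = of_int m" by (elim Ints_cases)
    then have "0 < m" "m < 1" using pos lt1 by auto
    then show False by simp
  qed
qed

end
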